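(* Let $E$ be a Hausdorff locally convex topological vector space, $\Omega$ a nonempty open subset of $E$, $F$ a nonempty subset of $E$ and $f:\Omega\to\mathbb{R}$ a function. Assume that $\hat{x}\in\Omega\cap F$ is an optimal solution of the problem of maximizing $f(x)$ subject to $x\in\Omega$, $x\in F$ (i.e. $f(\hat x)\ge f(x)$ for all $x\in\Omega\cap F$), that $f$ is Gateaux differentiable at $\hat{x}$, and that $F$ is weak-admissible at $\hat{x}$ and determined by a family $C$. Then either $\hat{x}\in\operatorname{int}(F)$ and therefore $d_G f(\hat{x})=0$, or, if $\hat{x}\in F\setminus\operatorname{int}(F)$, we have $0\in[d_G f(\hat{x}),\mathcal{T}_{C}(\hat{x})]$; that is, there exist $(\lambda^*,\beta^* )\in\mathbb{R}^+\times\mathbb{R}^+$ and $x^*\in\mathcal{T}_{C}(\hat{x})$ such that (i) $(\lambda^*,\beta^* )\neq(0,0)$ and (ii) $\lambda^* d_G f(\hat{x})+\beta^* x^*=0$. If moreover $0\notin\mathcal{T}_{C}(\hat{x})$ (in particular if $E$ is a normed space and $F$ is admissible at $\hat{x}$, determined by $C$), then one can choose $\lambda^*=1$.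
   Context: $E^*$ is the topological dual of $E$, equipped with the weak-star ($w^*$) topology; $\overline{\operatorname{conv}}^{w^*}(B)$ is the $w^*$-closed convex hull of $B\subset E^*$. A map $g$ from $E$ (or an open subset) into a normed space $Y$ is Gateaux differentiable at $x$ if there is a continuous linear map $d_Gg(x):E\to Y$ with $\lim_{t\searrow 0}\|(g(x+tv)-g(x)-t\,d_Gg(x)(v))/t\|=0$ for every $v\in E$. For a family $C$ of functions $\phi:E\to\mathbb{R}$, $[C]^\times:=\{x\in E:\phi(x)\ge 0\ \forall\phi\in C\}$. $C$ is equi-Gateaux differentiable at $x$ if each $\phi\in C$ is Gateaux differentiable at $x$ and for every $v\in E$, $\lim_{t\searrow0}\sup_{\phi\in C}|(\phi(x+tv)-\phi(x)-t\langle d_G\phi(x),v\rangle)/t|=0$. $C$ is equi-lower semicontinuous at $x$ if for every $\varepsilon>0$ there is an open neighbourhood $O$ of $x$ with $\phi(y)-\phi(x)>-\varepsilon$ for all $y\in O$ and all $\phi\in C$. If $E$ is normed, $C$ is $r$-equi-Lipschitz at $x$ ($r\ge0$) if there is a ball centered at $x$ on which every $\phi\in C$ is $r$-Lipschitz. A set $F\subset E$ is weak-admissible at $\hat x\in F$, determined by $C$, if $C$ is a nonempty family of functions $E\to\mathbb{R}$ with: (a) $F=[C]^\times$; (b) $C$ is equi-Gateaux differentiable at $\hat x$; (c) $\{\phi\in C:\phi(\hat x)\ne0\}$ is empty or equi-lower semicontinuous at $\hat x$; (d) $\overline{\operatorname{conv}}^{w^*}\{d_G\phi(\hat x):\phi\in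 C\}$ is $w^*$-compact in $E^*$. If $E$ is normed, $F$ is admissible at $\hat x\in F$, determined by $C$, if $C$ is a nonempty family of functions $E\to\mathbb{R}$ with: (a) $F=[C]^\times$; (b) $C$ is equi-Gateaux differentiable and $r$-equi-Lipschitz at $\hat x$ for some $r\ge0$; (c) $0\notin\overline{\operatorname{conv}}^{w^*}\{d_G\phi(\hat x):\phi\in C\}$. $\mathcal{T}_C(\hat x):=\bigcap_{n\ge1}\overline{\operatorname{conv}}^{w^*}\{d_G\phi(\hat x):\phi\in C,\ \phi(\hat x)\in[0,1/n]\}\subset E^*$. For a point $w$ and a set $K$, $[w,K]:=\{\lambda w+(1-\lambda)x:\lambda\in[0,1],x\in K\}$. *)

theory Defs
  imports "HOL-Analysis.Analysis"
begin

definition hlc_tvs :: "'a::{real_vector,t2_space} itself \<Rightarrow> bool" where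
  "hlc_tvs _ \<longleftrightarrow>
     continuous_on UNIV (\<lambda>(x::'a, y::'a). x + y) \<and>
     continuous_on UNIV (\<lambda>(c::real, x::'a). c *\<^sub>R x) \<and>
     (\<forall>U::'a set. open U \<and> 0 \<in> U \<longrightarrow> (\<exists>V. open V \<and> convex V \<and> 0 \<in> V \<and> V \<subseteq> U))"

text \<open>Viewed inside the
  function space 'a \<Rightarrow> real with the product topology, the subspace topology on
  E* is exactly the weak-star topology.\<close>
definition dual_space :: "('a::{real_vector,topological_space} \<Rightarrow> real) set" where
  "dual_space = {\<phi>. linear \<phi> \<and> continuous_on UNIV \<phi>}"

definition fconv :: "('a \<Rightarrow> real) set \<Rightarrow> ('a \<Rightarrow> real) set" where
  "fconv B = {\<lambda>v. \<Sum>i<n. a i * b i v | (n::nat) (a::nat\<Rightarrow>real) b.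
     (\<forall>i<n. 0 \<le> a i \<and> b i \<in> B) \<and> (\<Sum>i<n. a i) = 1}"

definition wstar_cconv :: "('a::{real_vector,topological_space} \<Rightarrow> real) set \<Rightarrow> ('a \<Rightarrow> real) set" where
  "wstar_cconv B = closure (fconv B) \<inter> dual_space"

definition has_gateaux_deriv :: "('a::{real_vector,topological_space} \<Rightarrow> real) \<Rightarrow> 'a \<Rightarrow> ('a \<Rightarrow> real) \<Rightarrow> bool" where
  "has_gateaux_deriv g x d \<longleftrightarrow> d \<in> dual_space \<and>
     (\<forall>v. ((\<lambda>t. \<bar>(g (x + t *\<^sub>R v) - g x - t * d v) / t\<bar>) \<longlongrightarrow> 0) (at_right 0))"

definition gateaux_differentiable :: "('a::{real_vector,topological_space} \<Rightarrow> real) \<Rightarrow> 'a \<Rightarrow> bool" where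
  "gateaux_differentiable g x \<longleftrightarrow> (\<exists>d. has_gateaux_deriv g x d)"

definition gat_deriv :: "('a::{real_vector,topological_space} \<Rightarrow> real) \<Rightarrow> 'a \<Rightarrow> ('a \<Rightarrow> real)" where
  "gat_deriv g x = (SOME d. has_gateaux_deriv g x d)"

definition nonneg_set :: "('a \<Rightarrow> real) set \<Rightarrow> 'a set" where
  "nonneg_set C = {x. \<forall>\<phi>\<in>C. \<phi> x \<ge> 0}"

text \<open>Equi-Gateaux differentiability: the supremum over C of the difference
  quotient errors tends to 0, written in epsilon form.\<close>
definition equi_gateaux :: "('a::{real_vector,topological_space} \<Rightarrow> real) set \<Rightarrow> 'a \<Rightarrow> bool" where
  "equi_gateaux C x \<longleftrightarrow> (\<forall>\<phi>\<in>C. gateaux_differentiable \<phi> x) \<and>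
     (\<forall>v. \<forall>\<epsilon>>0. eventually (\<lambda>t. \<forall>\<phi>\<in>C.
        \<bar>(\<phi> (x + t *\<^sub>R v) - \<phi> x - t * gat_deriv \<phi> x v) / t\<bar> < \<epsilon>) (at_right 0))"

definition equi_lsc :: "('a::topological_space \<Rightarrow> real) set \<Rightarrow> 'a \<Rightarrow> bool" where
  "equi_lsc C x \<longleftrightarrow> (\<forall>\<epsilon>>0. \<exists>W. open W \<and> x \<in> W \<and> (\<forall>y\<in>W. \<forall>\<phi>\<in>C. \<phi> y - \<phi> x > - \<epsilon>))"

definition weak_admissible :: "'a::{real_vector,topological_space} set \<Rightarrow> 'a \<Rightarrow> ('a \<Rightarrow> real) set \<Rightarrow> bool" where
  "weak_admissible F x C \<longleftrightarrow> x \<in> F \<and> C \<noteq> {} \<and> F = nonneg_set C \<and> equi_gateaux C x \<and>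
     ({\<phi>\<in>C. \<phi> x \<noteq> 0} = {} \<or> equi_lsc {\<phi>\<in>C. \<phi> x \<noteq> 0} x) \<and>
     compact (wstar_cconv ((\<lambda>\<phi>. gat_deriv \<phi> x) ` C))"

definition T_C :: "('a::{real_vector,topological_space} \<Rightarrow> real) set \<Rightarrow> 'a \<Rightarrow> ('a \<Rightarrow> real) set" where
  "T_C C x = (\<Inter>n\<in>{1::nat..}. wstar_cconv {gat_deriv \<phi> x | \<phi>. \<phi> \<in> C \<and> \<phi> x \<in> {0..1 / real n}})"

end

theory Submission
  imports Defs
begin


lemma gat_has: "gateaux_differentiable g x \<Longrightarrow> has_gateaux_deriv g x (gat_deriv g x)"
  unfolding gateaux_differentiable_def gat_deriv_def by (metis someI_ex)

lemma path_ev: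
  assumes "hlc_tvs TYPE('a::{real_vector,t2_space})" "open U" "(x::'a) \<in> U"
  shows "eventually (\<lambda>t. x + t *\<^sub>R v \<in> U) (at_right 0)"
proof -
  have c1: "continuous_on UNIV (\<lambda>(c::real, y::'a). c *\<^sub>R y)"
   and c2: "continuous_on UNIV (\<lambda>(x::'a, y::'a). x + y)"
    using assms(1) unfolding hlc_tvs_def by auto
  have "continuous_on UNIV (\<lambda>t::real. (\<lambda>(c, y). c *\<^sub>R y) (t, v))"
    by (rule continuous_on_compose2[OF c1]) (auto intro: continuous_intros)
  hence c3: "continuous_on UNIV (\<lambda>t::real. t *\<^sub>R v)" by simp
  have "continuous_on UNIV (\<lambda>t::real. (\<lambda>(a,b). a+b) (x, t*\<^sub>R v))"
    by (rule continuous_on_compose2[OF c2]) (auto intro!: continuous_intros c3)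
  hence "continuous_on UNIV (\<lambda>t::real. x + t*\<^sub>R v)" by simp
  hence "isCont (\<lambda>t::real. x + t*\<^sub>R v) 0"
    using continuous_on_eq_continuous_at open_UNIV by blast
  hence "((\<lambda>t::real. x + t*\<^sub>R v) \<longlongrightarrow> x) (at 0)" unfolding isCont_def by simp
  hence "((\<lambda>t::real. x + t*\<^sub>R v) \<longlongrightarrow> x) (at_right 0)"
    by (rule tendsto_mono[OF at_le[OF subset_UNIV]])
  thus ?thesis using assms(2,3) topological_tendstoD by blast
qed

lemma gat_ascent:
  assumes "has_gateaux_deriv g x d" "d v > 0"
  shows "eventually (\<lambda>t. g (x + t*\<^sub>R v) > g x) (at_right 0)"
proof -
  have "((\<lambda>t. \<bar>(g (x + t *\<^sub>R v) - g x - t * d v) / t\<bar>) \<longlongrightarrow> 0) (at_right 0)"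
    using assms(1) unfolding has_gateaux_deriv_def by blast
  hence "eventually (\<lambda>t. \<bar>(g (x + t *\<^sub>R v) - g x - t * d v) / t\<bar> < d v) (at_right 0)"
    using assms(2) order_tendstoD(2) by blast
  moreover have "eventually (\<lambda>t::real. 0 < t) (at_right 0)" by (rule eventually_at_right_less)
  ultimately show ?thesis
  proof eventually_elim
    case (elim t)
    hence "(g (x + t *\<^sub>R v) - g x - t * d v) / t > - d v"
      using elim(1) unfolding abs_less_iff by linarith
    hence "(g (x + t *\<^sub>R v) - g x - t * d v) / t * t > - d v * t" using elim(2)
      by (rule mult_strict_right_mono)
    hence "g (x + t *\<^sub>R v) - g x - t * d v > - d v * t" using elim(2) by simp
    thus ?case by (simp add: algebra_simps)
  qed
qed

lemma sum_split_nat: "(\<Sum>i<n+(m::nat). (g::nat\<Rightarrow>real) i) = (\<Sum>i<n. g i) + (\<Sum>i<m. g (n+i))"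
  by (induction m) (auto simp: add.assoc)

lemma fconv_convex:
  assumes "x \<in> fconv B" "y \<in> fconv B" "0 \<le> s" "s \<le> 1"
  shows "(\<lambda>v. (1-s) * x v + s * y v) \<in> fconv B"
proof -
  have "\<exists>(n::nat) a b. x = (\<lambda>v. \<Sum>i<n. a i * b i v) \<and> (\<forall>i<n. 0 \<le> a i \<and> b i \<in> B) \<and> (\<Sum>i<n. a i) = 1"
    using assms(1) unfolding fconv_def mem_Collect_eq by (simp only: mem_Collect_eq)
  then obtain n :: nat and a b where x: "x = (\<lambda>v. \<Sum>i<n. a i * b i v)" "\<forall>i<n. 0 \<le> a i \<and> b i \<in> B" "(\<Sum>i<n. a i) = 1"
    by blast
  have "\<exists>(m::nat) a' b'. y = (\<lambda>v. \<Sum>i<m. a' i * b' i v) \<and> (\<forall>i<m. 0 \<le> a' i \<and> b' i \<in> B) \<and> (\<Sum>i<m. a' i) = 1"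
    using assms(2) unfolding fconv_def mem_Collect_eq by (simp only: mem_Collect_eq)
  then obtain m :: nat and a' b' where y: "y = (\<lambda>v. \<Sum>i<m. a' i * b' i v)" "\<forall>i<m. 0 \<le> a' i \<and> b' i \<in> B" "(\<Sum>i<m. a' i) = 1"
    by blast
  define a2 where "a2 i = (if i < n then (1-s) * a i else s * a' (i-n))" for i
  define b2 where "b2 i = (if i < n then b i else b' (i-n))" for i
  have s1: "(\<Sum>i<n. g i) = (\<Sum>i<n. h i)" if "\<And>i. i < n \<Longrightarrow> g i = h i" for g h :: "nat \<Rightarrow> real"
    using that by (intro sum.cong) auto
  have e1: "(\<lambda>v. (1-s) * x v + s * y v) = (\<lambda>v. \<Sum>i<n+m. a2 i * b2 i v)"
  proof
    fix v
    have "(\<Sum>i<n+m. a2 i * b2 i v) = (\<Sum>i<n. (1-s) * (a i * b i v)) + (\<Sum>i<m. s * (a' i * b' i v))"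
      unfolding sum_split_nat a2_def b2_def by (intro arg_cong2[where f="(+)"] sum.cong) auto
    also have "\<dots> = (1-s) * x v + s * y v" unfolding x y by (simp add: sum_distrib_left)
    finally show "(1-s) * x v + s * y v = (\<Sum>i<n+m. a2 i * b2 i v)" by simp
  qed
  have e2: "(\<Sum>i<n+m. a2 i) = 1"
  proof -
    have "(\<Sum>i<n+m. a2 i) = (\<Sum>i<n. (1-s) * a i) + (\<Sum>i<m. s * a' i)"
      unfolding sum_split_nat a2_def by (intro arg_cong2[where f="(+)"] sum.cong) auto
    thus ?thesis using x(3) y(3) by (simp add: sum_distrib_left[symmetric])
  qed
  have e3: "\<forall>i<n+m. 0 \<le> a2 i \<and> b2 i \<in> B"
    using x(2) y(2) assms(3,4) unfolding a2_def b2_def by auto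
  show ?thesis unfolding fconv_def e1 using e2 e3 by blast
qed

lemma cont_coord: "continuous_on S f \<Longrightarrow> continuous_on S (\<lambda>x. f x i)"
  by (rule continuous_on_product_then_coordinatewise)

lemma closure_convex_fun:
  fixes S :: "('a::topological_space \<Rightarrow> real) set"
  assumes "\<And>x y s. x \<in> S \<Longrightarrow> y \<in> S \<Longrightarrow> 0 \<le> s \<Longrightarrow> s \<le> 1 \<Longrightarrow> (\<lambda>v. (1-s) * x v + s * y v) \<in> S"
    and "x \<in> closure S" "y \<in> closure S" "0 \<le> s" "s \<le> 1"
  shows "(\<lambda>v. (1-s) * x v + s * y v) \<in> closure S"
proof -
  let ?Q = "\<lambda>z::('a\<Rightarrow>real)\<times>('a\<Rightarrow>real). (\<lambda>v. (1-s) * fst z v + s * snd z v)"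
  have c: "continuous_on UNIV ?Q"
    by (intro continuous_on_coordinatewise_then_product continuous_on_add continuous_on_mult
        continuous_on_const cont_coord[OF continuous_on_fst[OF continuous_on_id]]
        cont_coord[OF continuous_on_snd[OF continuous_on_id]])
  have "?Q ` closure (S \<times> S) \<subseteq> closure S"
    by (rule image_closure_subset) (use c assms(1,4,5) in \<open>auto intro: continuous_on_subset closure_subset[THEN subsetD]\<close>)
  moreover have "(x,y) \<in> closure (S \<times> S)" using assms(2,3) by (simp add: closure_Times)
  ultimately show ?thesis by force
qed

lemma absdiv: "0 < (t::real) \<Longrightarrow> \<bar>q / t\<bar> < c \<Longrightarrow> q > - c * t"
proof -
  assume t: "0 < t" and h: "\<bar>q / t\<bar> < c"
  hence "q / t > - c" unfolding abs_less_iff by linarith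
  hence "q / t * t > - c * t" using t by (rule mult_strict_right_mono)
  thus ?thesis using t by simp
qed

lemma dual_comb: "x \<in> dual_space \<Longrightarrow> y \<in> dual_space \<Longrightarrow> (\<lambda>v. a * x v + b * y v) \<in> dual_space"
  unfolding dual_space_def
  by (auto simp: linear_iff algebra_simps intro!: continuous_intros)

lemma dual_lin: "k \<in> dual_space \<Longrightarrow> linear k"
  unfolding dual_space_def by auto

lemma fconv_mono: "A \<subseteq> B \<Longrightarrow> fconv A \<subseteq> fconv B"
  unfolding fconv_def by blast

lemma quad_lemma:
  fixes A Q :: real
  assumes "Q \<ge> 0" "\<And>t. 0 < t \<Longrightarrow> t \<le> 1 \<Longrightarrow> 0 \<le> 2*t*A + t^2*Q"
  shows "A \<ge> 0"
proof (rule ccontr)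
  assume "\<not> A \<ge> 0"
  hence A: "A < 0" by simp
  define t where "t = min 1 (- A / (Q + 1))"
  have t0: "0 < t" using A assms(1) unfolding t_def by (auto simp: divide_less_0_iff)
  have t1: "t \<le> 1" unfolding t_def by auto
  have "t * Q \<le> - A / (Q + 1) * Q" using assms(1) unfolding t_def
    by (intro mult_right_mono) auto
  also have "\<dots> < - A" using A assms(1) by (simp add: field_simps)
  finally have "2*A + t*Q < 0" using A by linarith
  hence "t * (2*A + t*Q) < 0" using t0 by (simp add: mult_pos_neg)
  moreover have "t * (2*A + t*Q) = 2*t*A + t^2*Q" by (simp add: algebra_simps power2_eq_square)
  ultimately show False using assms(2)[OF t0 t1] by linarith
qed

lemma minnorm_lemma:
  fixes p k :: "'a \<Rightarrow> real"
  assumes "\<And>t. 0 < t \<Longrightarrow> t \<le> 1 \<Longrightarrow> (\<Sum>w\<in>V. (p w)^2) \<le> (\<Sum>w\<in>V. ((1-t) * p w + t * k w)^2)"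
  shows "(\<Sum>w\<in>V. (p w)^2) \<le> (\<Sum>w\<in>V. p w * k w)"
proof -
  define A where "A = (\<Sum>w\<in>V. p w * (k w - p w))"
  define Q where "Q = (\<Sum>w\<in>V. (k w - p w)^2)"
  have eq: "(\<Sum>w\<in>V. ((1-t) * p w + t * k w)^2) = (\<Sum>w\<in>V. (p w)^2) + (2*t*A + t^2*Q)" for t
  proof -
    have "(\<Sum>w\<in>V. ((1-t) * p w + t * k w)^2) = (\<Sum>w\<in>V. (p w)^2 + (2*t*(p w * (k w - p w)) + t^2 * (k w - p w)^2))"
      by (intro sum.cong) (auto simp: power2_eq_square algebra_simps)
    also have "\<dots> = (\<Sum>w\<in>V. (p w)^2) + (2*t*A + t^2*Q)"
      unfolding A_def Q_def by (simp add: sum.distrib sum_distrib_left)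
    finally show ?thesis .
  qed
  have "A \<ge> 0"
    by (rule quad_lemma[of Q]) (use assms eq in \<open>auto simp: Q_def intro: sum_nonneg\<close>)
  hence "0 \<le> (\<Sum>w\<in>V. p w * k w - (p w)^2)" unfolding A_def
    by (simp add: algebra_simps power2_eq_square)
  thus ?thesis by (simp add: sum_subtractf)
qed



theorem theorem4p2:
  fixes f :: "'a::{real_vector,t2_space} \<Rightarrow> real"
    and \<Omega> F :: "'a set" and C :: "('a \<Rightarrow> real) set" and xh :: 'a
  assumes "hlc_tvs TYPE('a)"
    and "open \<Omega>" and "\<Omega> \<noteq> {}" and "F \<noteq> {}"
    and "xh \<in> \<Omega> \<inter> F"
    and "\<forall>x\<in>\<Omega> \<inter> F. f x \<le> f xh"
    and "gateaux_differentiable f xh"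
    and "weak_admissible F xh C"
  shows "(xh \<in> interior F \<and> gat_deriv f xh = (\<lambda>_. 0))
         \<or> (xh \<in> F - interior F \<and>
            (\<exists>lam \<beta>s xs. lam \<ge> 0 \<and> \<beta>s \<ge> 0 \<and> xs \<in> T_C C xh \<and> (lam, \<beta>s) \<noteq> (0, 0) \<and>
                 (\<lambda>v. lam * gat_deriv f xh v + \<beta>s * xs v) = (\<lambda>_. 0)) \<and>
            ((\<lambda>_. 0) \<notin> T_C C xh \<longrightarrow>
               (\<exists>\<beta>s xs. \<beta>s \<ge> 0 \<and> xs \<in> T_C C xh \<and>
                 (\<lambda>v. gat_deriv f xh v + \<beta>s * xs v) = (\<lambda>_. 0))))"
proof -
  note hlc = assms(1)
  have xhF: "xh \<in> F" and Cne: "C \<noteq> {}" and Fdef: "F = nonneg_set C"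
    and eg: "equi_gateaux C xh"
    and lsc: "{\<phi>\<in>C. \<phi> xh \<noteq> 0} = {} \<or> equi_lsc {\<phi>\<in>C. \<phi> xh \<noteq> 0} xh"
    and cpt: "compact (wstar_cconv ((\<lambda>\<phi>. gat_deriv \<phi> xh) ` C))"
    using assms(8) unfolding weak_admissible_def by auto
  define D where "D = gat_deriv f xh"
  have hasD: "has_gateaux_deriv f xh D" unfolding D_def by (rule gat_has[OF assms(7)])
  have Dd: "D \<in> dual_space" using hasD unfolding has_gateaux_deriv_def by auto
  have hasphi: "has_gateaux_deriv \<phi> xh (gat_deriv \<phi> xh)" if "\<phi> \<in> C" for \<phi>
    using eg that unfolding equi_gateaux_def by (auto intro: gat_has)
  have dphi: "gat_deriv \<phi> xh \<in> dual_space" if "\<phi> \<in> C" for \<phi>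
    using hasphi[OF that] unfolding has_gateaux_deriv_def by auto
  have nonneg: "\<phi> xh \<ge> 0" if "\<phi> \<in> C" for \<phi>
    using xhF that unfolding Fdef nonneg_set_def by auto
  have xhO: "xh \<in> \<Omega>" using assms(5) by auto
  have nbot: "(at_right (0::real)) \<noteq> bot" using trivial_limit_at_right_real by blast

  have ascent_false: False
    if Dv: "D v > 0" and n1: "n \<ge> (1::nat)" and c0: "c > 0"
      and hc: "\<forall>\<phi>\<in>C. \<phi> xh \<le> 1 / real n \<longrightarrow> gat_deriv \<phi> xh v \<ge> c" for v n c
  proof -
    have n0: "1 / real n > 0" using n1 by simp
    obtain W where W: "open W" "xh \<in> W" "\<forall>y\<in>W. \<forall>\<phi>\<in>C. \<phi> xh > 1 / real n \<longrightarrow> \<phi> y > 0"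
    proof (cases "{\<phi>\<in>C. \<phi> xh \<noteq> 0} = {}")
      case True
      show ?thesis by (rule that[of UNIV]) (use True n0 in auto)
    next
      case False
      hence "equi_lsc {\<phi>\<in>C. \<phi> xh \<noteq> 0} xh" using lsc by auto
      then obtain U where U: "open U" "xh \<in> U" "\<forall>y\<in>U. \<forall>\<phi>\<in>{\<phi>\<in>C. \<phi> xh \<noteq> 0}. \<phi> y - \<phi> xh > - (1 / real n)"
        unfolding equi_lsc_def using n0 by blast
      show ?thesis
      proof (rule that[OF U(1,2)], intro ballI impI)
        fix y \<phi> assume "y \<in> U" "\<phi> \<in> C" "\<phi> xh > 1 / real n"
        thus "\<phi> y > 0" using U(3) n0 by force
      qed
    qed
    have E1: "eventually (\<lambda>t. xh + t *\<^sub>R v \<in> \<Omega>) (at_right 0)" by (rule path_ev[OF hlc assms(2) xhO])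
    have E2: "eventually (\<lambda>t. xh + t *\<^sub>R v \<in> W) (at_right 0)" by (rule path_ev[OF hlc W(1,2)])
    have E3: "eventually (\<lambda>t. f (xh + t *\<^sub>R v) > f xh) (at_right 0)" by (rule gat_ascent[OF hasD Dv])
    have E4: "eventually (\<lambda>t. \<forall>\<phi>\<in>C.
        \<bar>(\<phi> (xh + t *\<^sub>R v) - \<phi> xh - t * gat_deriv \<phi> xh v) / t\<bar> < c) (at_right 0)"
      using eg c0 unfolding equi_gateaux_def by blast
    have E5: "eventually (\<lambda>t::real. 0 < t) (at_right 0)" by (rule eventually_at_right_less)
    have "eventually (\<lambda>t. xh + t *\<^sub>R v \<in> \<Omega> \<and> xh + t *\<^sub>R v \<in> W \<and> f (xh + t *\<^sub>R v) > f xh \<and>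
       (\<forall>\<phi>\<in>C. \<bar>(\<phi> (xh + t *\<^sub>R v) - \<phi> xh - t * gat_deriv \<phi> xh v) / t\<bar> < c) \<and> 0 < t) (at_right 0)"
      using E1 E2 E3 E4 E5 by eventually_elim auto
    then obtain t where t: "xh + t *\<^sub>R v \<in> \<Omega>" "xh + t *\<^sub>R v \<in> W" "f (xh + t *\<^sub>R v) > f xh"
      "\<forall>\<phi>\<in>C. \<bar>(\<phi> (xh + t *\<^sub>R v) - \<phi> xh - t * gat_deriv \<phi> xh v) / t\<bar> < c" "0 < t"
      using eventually_happens'[OF nbot] by blast
    have "xh + t *\<^sub>R v \<in> F" unfolding Fdef nonneg_set_def
    proof (safe)
      fix \<phi> assume ph: "\<phi> \<in> C"
      show "0 \<le> \<phi> (xh + t *\<^sub>R v)"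
      proof (cases "\<phi> xh \<le> 1 / real n")
        case True
        have "\<phi> (xh + t *\<^sub>R v) - \<phi> xh - t * gat_deriv \<phi> xh v > - c * t"
          using absdiv[OF t(5)] t(4) ph by blast
        moreover have "t * gat_deriv \<phi> xh v \<ge> t * c" using hc True ph t(5) by auto
        ultimately show ?thesis using nonneg[OF ph] by (simp add: algebra_simps)
      next
        case False
        thus ?thesis using W(3) t(2) ph by force
      qed
    qed
    thus False using assms(6) t(1,3) by force
  qed

  show ?thesis
  proof (cases "xh \<in> interior F")
    case True
    have Dle: "D v \<le> 0" for v
    proof (rule ccontr)
      assume "\<not> D v \<le> 0"
      hence Dv: "D v > 0" by simp
      have "open (\<Omega> \<inter> interior F)" using assms(2) by auto
      hence E1: "eventually (\<lambda>t. xh + t *\<^sub>R v \<in> \<Omega> \<inter> interior F) (at_right 0)"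
        by (rule path_ev[OF hlc]) (use True xhO in auto)
      have E3: "eventually (\<lambda>t. f (xh + t *\<^sub>R v) > f xh) (at_right 0)" by (rule gat_ascent[OF hasD Dv])
      have "eventually (\<lambda>t. xh + t *\<^sub>R v \<in> \<Omega> \<inter> interior F \<and> f (xh + t *\<^sub>R v) > f xh) (at_right 0)"
        using E1 E3 by eventually_elim auto
      then obtain t where "xh + t *\<^sub>R v \<in> \<Omega> \<inter> interior F" "f (xh + t *\<^sub>R v) > f xh"
        using eventually_happens'[OF nbot] by blast
      thus False using assms(6) interior_subset by force
    qed
    have "D = (\<lambda>_. 0)"
    proof
      fix v
      have "D (-v) = - D v" using dual_lin[OF Dd] by (rule real_vector.linear_neg)
      thus "D v = 0" using Dle[of v] Dle[of "-v"] by linarith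
    qed
    thus ?thesis using True unfolding D_def by simp
  next
    case False
    define Bn where "Bn n = {gat_deriv \<phi> xh | \<phi>. \<phi> \<in> C \<and> \<phi> xh \<in> {0..1 / real n}}" for n :: nat
    define Tn where "Tn n = wstar_cconv (Bn n)" for n
    define W where "W = wstar_cconv ((\<lambda>\<phi>. gat_deriv \<phi> xh) ` C)"
    define L where "L z = (\<lambda>v. fst z * D v + (1 - fst z) * snd z v)" for z :: "real \<times> ('a \<Rightarrow> real)"
    have Bn_ne: "Bn n \<noteq> {}" if n1: "n \<ge> 1" for n
    proof
      assume e: "Bn n = {}"
      have n0: "1 / real n > 0" using n1 by simp
      have gt: "\<phi> xh > 1 / real n" if ph: "\<phi> \<in> C" for \<phi>
      proof (rule ccontr)
        assume "\<not> \<phi> xh > 1 / real n"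
        hence "\<phi> xh \<in> {0..1 / real n}" using nonneg[OF ph] by simp
        hence "gat_deriv \<phi> xh \<in> Bn n" unfolding Bn_def using ph by blast
        thus False using e by simp
      qed
      have "\<phi> xh \<noteq> 0" if "\<phi> \<in> C" for \<phi> using gt[OF that] n0 by linarith
      hence "{\<phi>\<in>C. \<phi> xh \<noteq> 0} = C" by blast
      hence "equi_lsc C xh" using lsc Cne by auto
      then obtain U where U: "open U" "xh \<in> U" "\<forall>y\<in>U. \<forall>\<phi>\<in>C. \<phi> y - \<phi> xh > - (1 / real n)"
        unfolding equi_lsc_def using n0 by blast
      have "U \<subseteq> F" unfolding Fdef nonneg_set_def
      proof safe
        fix y \<phi> assume yp: "y \<in> U" "\<phi> \<in> C"
        have "\<phi> y - \<phi> xh > - (1 / real n)" using U(3) yp by blast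
        thus "0 \<le> \<phi> y" using gt[OF yp(2)] by linarith
      qed
      hence "xh \<in> interior F" using U by (meson interior_maximal interior_open subsetD)
      thus False using False by simp
    qed
    have Bn_sub: "Bn n \<subseteq> Tn n" for n
    proof
      fix b assume b: "b \<in> Bn n"
      have "b \<in> fconv (Bn n)" unfolding fconv_def
        by (rule CollectI, rule exI[of _ 1], rule exI[of _ "\<lambda>_. 1"], rule exI[of _ "\<lambda>_. b"]) (use b in auto)
      moreover have "b \<in> dual_space" using b dphi unfolding Bn_def by auto
      ultimately show "b \<in> Tn n" unfolding Tn_def wstar_cconv_def using closure_subset by auto
    qed
    have Tn_dual: "Tn n \<subseteq> dual_space" for n unfolding Tn_def wstar_cconv_def by auto
    have Tn_conv: "(\<lambda>v. (1-s) * x v + s * y v) \<in> Tn n"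
      if "x \<in> Tn n" "y \<in> Tn n" "0 \<le> s" "s \<le> 1" for n x y s
    proof -
      have xc: "x \<in> closure (fconv (Bn n))" "y \<in> closure (fconv (Bn n))"
        using that(1,2) unfolding Tn_def wstar_cconv_def by auto
      have "(\<lambda>v. (1-s) * x v + s * y v) \<in> closure (fconv (Bn n))"
        by (rule closure_convex_fun[OF fconv_convex xc that(3,4)])
      moreover have "(\<lambda>v. (1-s) * x v + s * y v) \<in> dual_space"
        using that by (auto intro: dual_comb simp: Tn_def wstar_cconv_def)
      ultimately show ?thesis unfolding Tn_def wstar_cconv_def by auto
    qed
    have Tn_eq: "Tn n = W \<inter> closure (fconv (Bn n))" for n
    proof -
      have "Bn n \<subseteq> (\<lambda>\<phi>. gat_deriv \<phi> xh) ` C" unfolding Bn_def by auto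
      hence "closure (fconv (Bn n)) \<subseteq> closure (fconv ((\<lambda>\<phi>. gat_deriv \<phi> xh) ` C))"
        by (intro closure_mono fconv_mono)
      thus ?thesis unfolding Tn_def W_def wstar_cconv_def by auto
    qed
    have Tn_cpt: "compact (Tn n)" for n
      unfolding Tn_eq W_def using cpt by (intro compact_Int_closed) auto
    have Tn_dec: "Tn n \<subseteq> Tn m" if "1 \<le> m" "m \<le> n" for m n
    proof -
      have "1 / real n \<le> 1 / real m" using that by (simp add: frac_le)
      hence "{0..1 / real n} \<subseteq> {0..1 / real m}" by auto
      hence "Bn n \<subseteq> Bn m" unfolding Bn_def by blast
      thus ?thesis unfolding Tn_def wstar_cconv_def by (meson Int_mono closure_mono fconv_mono order_refl)
    qed
    have sc: "continuous_on UNIV (\<lambda>z::real\<times>('a\<Rightarrow>real). snd z v)" for v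
      by (rule cont_coord[OF continuous_on_snd[OF continuous_on_id]])
    have Lcont: "continuous_on UNIV L"
      unfolding L_def by (intro continuous_on_coordinatewise_then_product continuous_on_add
        continuous_on_mult continuous_on_const continuous_on_fst continuous_on_id continuous_on_diff sc)
    have Lcontw: "continuous_on UNIV (\<lambda>z. L z w)" for w
      using Lcont by (rule cont_coord)
    have Lneg: "L z (-w) = - L z w" if "snd z \<in> dual_space" for z w
      using real_vector.linear_neg[OF dual_lin[OF Dd]] real_vector.linear_neg[OF dual_lin[OF that]]
      unfolding L_def by (simp add: algebra_simps)

    have Sn_ne: "\<exists>l x. l \<in> {0..1} \<and> x \<in> Tn n \<and> L (l, x) = (\<lambda>_. 0)" if n1: "n \<ge> 1" for n
    proof (rule ccontr)
      assume H: "\<not> ?thesis"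
      define Z where "Z = {0..1::real} \<times> Tn n"
      have Zc: "compact Z" unfolding Z_def by (intro compact_Times Tn_cpt) auto
      have Zne: "Z \<noteq> {}" using Bn_ne[OF n1] Bn_sub[of n] unfolding Z_def by auto
      have pos: "\<exists>w. L z w > 0" if "z \<in> Z" for z
      proof -
        obtain l x where z: "z = (l, x)" "l \<in> {0..1}" "x \<in> Tn n" using \<open>z \<in> Z\<close> unfolding Z_def by auto
        hence "L z \<noteq> (\<lambda>_. 0)" using H by auto
        then obtain w where w: "L z w \<noteq> 0" by auto
        have "snd z \<in> dual_space" using z Tn_dual by auto
        hence "L z (-w) = - L z w" by (rule Lneg)
        thus ?thesis using w by (cases "L z w > 0") (auto intro: exI[of _ "-w"])
      qed
      have cov: "Z \<subseteq> (\<Union>w\<in>UNIV. {z. L z w > 0})" using pos by auto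
      have opn: "open {z. L z w > 0}" for w
      proof -
        have "open ((\<lambda>z. L z w) -` {0<..})" by (rule open_vimage) (auto intro: Lcontw)
        thus ?thesis by (simp add: vimage_def)
      qed
      obtain V where V: "V \<subseteq> UNIV" "finite V" "Z \<subseteq> (\<Union>w\<in>V. {z. L z w > 0})"
        by (rule compactE_image[OF Zc, where f="\<lambda>w. {z. L z w > 0}" and C=UNIV]) (rule opn, rule cov, blast)
      define N where "N z = (\<Sum>w\<in>V. (L z w)^2)" for z
      have Ncont: "continuous_on Z N" unfolding N_def
        by (intro continuous_on_sum continuous_on_power continuous_on_subset[OF Lcontw]) auto
      obtain z0 where z0: "z0 \<in> Z" "\<forall>z\<in>Z. N z0 \<le> N z"
        using continuous_attains_inf[OF Zc Zne Ncont] by blast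
      have Npos: "N z > 0" if zZ: "z \<in> Z" for z
      proof -
        obtain w where w: "w \<in> V" "L z w > 0" using V(3) zZ by auto
        have "(L z w)^2 \<le> N z" unfolding N_def
          by (rule member_le_sum[of w V "\<lambda>w. (L z w)^2"]) (use w V in auto)
        moreover have "(L z w)^2 > 0" using w by simp
        ultimately show ?thesis by linarith
      qed
      define p where "p = L z0"
      define m0 where "m0 = N z0"
      have m0: "m0 > 0" unfolding m0_def using Npos z0 by auto
      obtain l0 x0 where z0e: "z0 = (l0, x0)" "l0 \<in> {0..1}" "x0 \<in> Tn n" using z0(1) unfolding Z_def by auto
      define v where "v = (\<Sum>w\<in>V. p w *\<^sub>R w)"
      have kv: "k v = (\<Sum>w\<in>V. p w * k w)" if "k \<in> dual_space" for k
        using dual_lin[OF that] unfolding v_def by (simp add: real_vector.linear_sum linear_cmul)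
      have key: "m0 \<le> (\<Sum>w\<in>V. p w * k w)"
        if hk: "\<And>t. 0 < t \<Longrightarrow> t \<le> 1 \<Longrightarrow> \<exists>z\<in>Z. L z = (\<lambda>w. (1-t) * p w + t * k w)" for k
      proof -
        have "(\<Sum>w\<in>V. (p w)^2) \<le> (\<Sum>w\<in>V. ((1-t) * p w + t * k w)^2)" if tt: "0 < t" "t \<le> 1" for t
        proof -
          obtain z where z: "z \<in> Z" "L z = (\<lambda>w. (1-t) * p w + t * k w)" using hk[OF tt] by blast
          have "N z0 \<le> N z" using z0 z by auto
          thus ?thesis using z(2) by (simp add: N_def p_def)
        qed
        hence "(\<Sum>w\<in>V. (p w)^2) \<le> (\<Sum>w\<in>V. p w * k w)" by (rule minnorm_lemma)
        thus ?thesis by (simp add: m0_def N_def p_def)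
      qed
      have keyD: "m0 \<le> D v"
      proof -
        have "m0 \<le> (\<Sum>w\<in>V. p w * D w)"
        proof (rule key)
          fix t :: real assume t: "0 < t" "t \<le> 1"
          show "\<exists>z\<in>Z. L z = (\<lambda>w. (1-t) * p w + t * D w)"
          proof (rule bexI[of _ "(l0 + t * (1 - l0), x0)"])
            have h: "t * (1 - l0) \<le> 1 * (1 - l0)" using z0e t by (intro mult_right_mono) auto
            have h2: "0 \<le> t * (1 - l0)" using z0e t by auto
            have "l0 + t * (1 - l0) \<in> {0..1}" unfolding atLeastAtMost_iff
              using h h2 z0e(2) by (intro conjI) (simp_all only: atLeastAtMost_iff mult_1; linarith)+
            thus "(l0 + t * (1 - l0), x0) \<in> Z" unfolding Z_def using z0e(3) by blast
            show "L (l0 + t * (1 - l0), x0) = (\<lambda>w. (1-t) * p w + t * D w)"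
              unfolding p_def z0e L_def by (auto simp: algebra_simps)
          qed
        qed
        thus ?thesis using kv[OF Dd] by simp
      qed
      have keyT: "m0 \<le> y v" if y: "y \<in> Tn n" for y
      proof -
        have "m0 \<le> (\<Sum>w\<in>V. p w * y w)"
        proof (rule key)
          fix t :: real assume t: "0 < t" "t \<le> 1"
          define den where "den = 1 - (1-t) * l0"
          have l0b: "0 \<le> l0" "l0 \<le> 1" using z0e(2) by auto
          have a: "(1-t) * l0 \<le> (1-t) * 1" using t l0b by (intro mult_left_mono) auto
          have a2: "0 \<le> (1-t) * l0" using t l0b by auto
          have tden: "t \<le> den" unfolding den_def using a by simp
          have den0: "den > 0" using tden t by linarith
          define s where "s = t / den"
          have s0: "0 \<le> s" unfolding s_def using t den0 by auto
          have s1: "s \<le> 1" unfolding s_def using tden den0 by (simp add: divide_le_eq_1)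
          define x' where "x' = (\<lambda>v. (1-s) * x0 v + s * y v)"
          have x': "x' \<in> Tn n" unfolding x'_def by (rule Tn_conv[OF z0e(3) y s0 s1])
          show "\<exists>z\<in>Z. L z = (\<lambda>w. (1-t) * p w + t * y w)"
          proof (rule bexI[of _ "((1-t) * l0, x')"])
            have "(1-t) * l0 \<in> {0..1}" using a a2 t by simp
            thus "((1-t) * l0, x') \<in> Z" unfolding Z_def using x' by blast
            show "L ((1-t) * l0, x') = (\<lambda>w. (1-t) * p w + t * y w)"
            proof
              fix w
              have ds: "den * s = t" unfolding s_def using den0 by simp
              have "den * x' w = (den - den * s) * x0 w + (den * s) * y w"
                unfolding x'_def by (simp add: algebra_simps)
              also have "\<dots> = (den - t) * x0 w + t * y w" using ds by simp
              also have "den - t = (1-t)*(1-l0)" unfolding den_def by (simp add: algebra_simps)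
              finally have eqw: "den * x' w = (1-t)*(1-l0) * x0 w + t * y w" .
              have e1: "L ((1-t) * l0, x') w = (1-t)*l0 * D w + den * x' w"
                unfolding L_def den_def by simp
              have e2: "p w = l0 * D w + (1-l0) * x0 w" unfolding p_def z0e L_def by simp
              show "L ((1-t) * l0, x') w = (1-t) * p w + t * y w"
                unfolding e1 eqw e2 by (simp add: algebra_simps)
            qed
          qed
        qed
        moreover have "y \<in> dual_space" using Tn_dual y by auto
        ultimately show ?thesis using kv by simp
      qed
      show False
      proof (rule ascent_false[of v n m0])
        show "D v > 0" using keyD m0 by linarith
        show "n \<ge> 1" by (rule n1)
        show "m0 > 0" by (rule m0)
        show "\<forall>\<phi>\<in>C. \<phi> xh \<le> 1 / real n \<longrightarrow> m0 \<le> gat_deriv \<phi> xh v"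
        proof safe
          fix \<phi> assume ph: "\<phi> \<in> C" "\<phi> xh \<le> 1 / real n"
          have "\<phi> xh \<in> {0..1 / real n}" using ph nonneg[OF ph(1)] by simp
          hence "gat_deriv \<phi> xh \<in> Bn n" unfolding Bn_def using ph(1) by blast
          hence "gat_deriv \<phi> xh \<in> Tn n" using Bn_sub by blast
          thus "m0 \<le> gat_deriv \<phi> xh v" by (rule keyT)
        qed
      qed
    qed

    define S where "S = {0..1::real} \<times> W"
    define Fm where "Fm n = {z. snd z \<in> closure (fconv (Bn n))} \<inter> {z. \<forall>v. L z v = 0}" for n
    have "S \<inter> (\<Inter>i\<in>{1..}. Fm i) \<noteq> {}"
    proof (rule compact_imp_fip_image)
      have Wc: "compact W" using cpt unfolding W_def .
      show "compact S" unfolding S_def by (rule compact_Times[OF compact_Icc Wc])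
      fix i :: nat
      have c1: "closed {z::real \<times> ('a \<Rightarrow> real). snd z \<in> closure (fconv (Bn i))}"
        using closed_vimage_snd[of "closure (fconv (Bn i))"] by (simp add: vimage_def)
      have cv: "closed ((\<lambda>z. L z v) -` {0})" for v
        by (rule closed_vimage[OF closed_singleton Lcontw])
      have c2: "closed (\<Inter>v. (\<lambda>z. L z v) -` {0})"
        by (intro closed_INT ballI cv)
      have e2: "(\<Inter>v. (\<lambda>z. L z v) -` {0}) = {z. \<forall>v. L z v = 0}" by auto
      have "Fm i = {z. snd z \<in> closure (fconv (Bn i))} \<inter> (\<Inter>v. (\<lambda>z. L z v) -` {0})"
        unfolding Fm_def e2 ..
      thus "closed (Fm i)" using closed_Int[OF c1 c2] by simp
    next
      fix I' assume I': "finite I'" "I' \<subseteq> {1::nat..}"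
      define N where "N = Max (insert 1 I')"
      have N1: "N \<ge> 1" unfolding N_def using I' by simp
      have NI: "i \<le> N" if "i \<in> I'" for i unfolding N_def using I' that by simp
      obtain l x where lx: "l \<in> {0..1}" "x \<in> Tn N" "L (l, x) = (\<lambda>_. 0)" using Sn_ne[OF N1] by blast
      have xW: "x \<in> W" using lx(2) unfolding Tn_eq by simp
      have inS: "(l, x) \<in> S" unfolding S_def using lx(1) xW by simp
      have inF: "(l, x) \<in> Fm i" if iI: "i \<in> I'" for i
      proof -
        have i1: "1 \<le> i" using I'(2) iI by auto
        have "x \<in> Tn i" using Tn_dec[OF i1 NI[OF iI]] lx(2) by blast
        hence "x \<in> closure (fconv (Bn i))" unfolding Tn_eq by simp
        moreover have "\<forall>v. L (l, x) v = 0" using lx(3) by simp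
        ultimately show ?thesis unfolding Fm_def by simp
      qed
      show "S \<inter> (\<Inter>i\<in>I'. Fm i) \<noteq> {}" using inS inF by blast
    qed
    then obtain z where z: "z \<in> S \<inter> (\<Inter>i\<in>{1..}. Fm i)" by (meson ex_in_conv)
    obtain l x where zlx: "z = (l, x)" by (cases z)
    have lx: "(l, x) \<in> S" "\<forall>i\<in>{1::nat..}. (l, x) \<in> Fm i" using z unfolding zlx by auto
    have l01: "0 \<le> l" "l \<le> 1" using lx(1) unfolding S_def by auto
    have xT: "x \<in> T_C C xh"
    proof -
      have "x \<in> Tn i" if i1: "i \<ge> 1" for i
      proof -
        have "(l, x) \<in> Fm i" using lx(2) i1 by simp
        hence "x \<in> closure (fconv (Bn i))" unfolding Fm_def by simp
        moreover have "x \<in> W" using lx(1) unfolding S_def by simp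
        ultimately show ?thesis unfolding Tn_eq by simp
      qed
      thus ?thesis unfolding T_C_def Tn_def Bn_def by auto
    qed
    have L0: "l * D v + (1 - l) * x v = 0" for v
      using lx(2) unfolding Fm_def L_def by auto
    have part1: "\<exists>lam \<beta>s xs. lam \<ge> 0 \<and> \<beta>s \<ge> 0 \<and> xs \<in> T_C C xh \<and> (lam, \<beta>s) \<noteq> (0, 0) \<and>
                 (\<lambda>v. lam * gat_deriv f xh v + \<beta>s * xs v) = (\<lambda>_. 0)"
      by (rule exI[of _ l], rule exI[of _ "1 - l"], rule exI[of _ x])
         (use l01 xT L0 in \<open>auto simp: D_def fun_eq_iff\<close>)
    have part2: "\<exists>\<beta>s xs. \<beta>s \<ge> 0 \<and> xs \<in> T_C C xh \<and>
                 (\<lambda>v. gat_deriv f xh v + \<beta>s * xs v) = (\<lambda>_. 0)"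
      if nz: "(\<lambda>_. 0) \<notin> T_C C xh"
    proof -
      have "l \<noteq> 0"
      proof
        assume "l = 0"
        hence "x = (\<lambda>_. 0)" using L0 by (auto simp: fun_eq_iff)
        thus False using xT nz by simp
      qed
      hence lp: "l > 0" using l01 by simp
      show ?thesis
      proof (rule exI[of _ "(1 - l) / l"], rule exI[of _ x], intro conjI)
        show "(1 - l) / l \<ge> 0" using l01 lp by simp
        show "x \<in> T_C C xh" by (rule xT)
        show "(\<lambda>v. gat_deriv f xh v + (1 - l) / l * x v) = (\<lambda>_. 0)"
        proof
          fix v
          have "l * (D v + (1 - l) / l * x v) = 0" using L0[of v] lp by (simp add: field_simps)
          thus "gat_deriv f xh v + (1 - l) / l * x v = 0" using lp unfolding D_def by simp
        qed
      qed
    qed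
    show ?thesis
      apply (rule disjI2, intro conjI impI)
      using False xhF apply simp
       apply (rule part1)
      by (rule part2)
  qed
qed

end
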